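(* For every $t\ge 0$, every $k\ge1$ and every collection $\Omega$ of functions, $$\rho_0\bigl(\mathsf{TL}_{k+1}^{(t+k)}(\Omega)\bigr)\subseteq\rho_0\bigl(\mathsf{gwl}_k^{(t)}\bigr)\subseteq\rho_0\bigl(\mathsf{TL}_{k+1}^{(t+1)}(\Omega)\bigr).$$
   Context: Fix integers $n\ge 1$ and $\ell\ge 1$. A graph is a triple $G=(V_G,E_G,\mathrm{col}_G)$ with $V_G=[n]=\{1,\dots,n\}$, $E_G$ a set of unordered pairs of distinct vertices (undirected, no loops), and a vertex labelling $\mathrm{col}_G:V_G\to\mathbb R^\ell$. Let $\mathcal G$ be the set of all such graphs. Tensor language $\mathsf{TL}(\Omega)$: let $\Omega$ be a collection of functions, each of the form $f:\mathbb R^p\to\mathbb R$ for some $p\ge1$ depending on $f$. Expressions are generated by $\varphi::=\mathbf 1_{x=y}\mid \mathbf 1_{x\neq y}\mid E(x,y)\mid P_s(x)\mid \varphi\cdot\varphi\mid \varphi+\varphi\mid a\cdot\varphi\mid f(\varphi_1,\dots,\varphi_p)\mid \sum_x\varphi$, with $x,y$ index variables, $s\in[\ell]$, $a\in\mathbb R$, $f\in\Omega$ of arity $p$. Free variables: $\mathrm{free}(\mathbf 1_{x\,\mathrm{op}\,y})=\mathrm{free}(E(x,y))=\{x,y\}$, $\mathrm{free}(P_s(x))=\{x\}$; union of the components' free variables for $\cdot$, $+$, $f(\dots)$; $\mathrm{free}(a\cdot\varphi)=\mathrm{free}(\varphi)$; $\mathrm{free}(\sum_x\varphi)=\mathrm{free}(\varphi)\setminus\{x\}$.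 Semantics: for a graph $G$ and a valuation $\nu$ mapping variables to $V_G$: $[\![E(x,y)]\!]^\nu_G=1$ if $\nu(x)\nu(y)\in E_G$ and $0$ otherwise; $[\![P_s(x)]\!]^\nu_G=\mathrm{col}_G(\nu(x))_s$; $[\![\mathbf 1_{x\,\mathrm{op}\,y}]\!]^\nu_G=1$ if $\nu(x)\,\mathrm{op}\,\nu(y)$ and $0$ otherwise; $\cdot$, $+$, scalar multiplication and $f$ act on values; $[\![\sum_x\varphi]\!]^\nu_G=\sum_{v\in V_G}[\![\varphi]\!]^{\nu[x\mapsto v]}_G$. Summation depth $\mathrm{sd}$: $0$ for atoms, maximum over the components for $\cdot$, $+$, $f(\dots)$, $\mathrm{sd}(a\cdot\varphi)=\mathrm{sd}(\varphi)$, $\mathrm{sd}(\sum_x\varphi)=\mathrm{sd}(\varphi)+1$. $\mathsf{TL}_k(\Omega)$ is the set of expressions in which only variables from $\{x_1,\dots,x_k\}$ occur (free or bound; variables may be re-bound), and $\mathsf{TL}_k^{(t)}(\Omega)$ its subset of summation depth at most $t$. For a set $\mathcal L$ of expressions, $\rho_0(\mathcal L)$ is the set of pairs of graphs $(G,H)$ with $[\![\varphi]\!]_G=[\![\varphi]\!]_H$ for all closed (no free variables) $\varphi\in\mathcal L$. $k$-dimensional Weisfeiler–Leman ($k\ge1$): for $\mathbf v\in V_G^k$, $\mathsf{atp}_k(G,\mathbf v)$ records, for all $1\le i<j\le k$, whether $v_i=v_j$ and whether $v_iv_j\in E_G$, together with $\mathrm{col}_G(v_i)$ for all $i$. $\mathsf{wl}_k^{(0)}(G,\mathbf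 v)=\mathsf{atp}_k(G,\mathbf v)$, $\mathsf{wl}_k^{(t+1)}(G,\mathbf v)=\bigl(\mathsf{wl}_k^{(t)}(G,\mathbf v),\{\!\{(\mathsf{atp}_{k+1}(G,(v_1,\dots,v_k,u)),\mathsf{wl}_k^{(t)}(G,\mathbf v[u/1]),\dots,\mathsf{wl}_k^{(t)}(G,\mathbf v[u/k])):u\in V_G\}\!\}\bigr)$, where $\mathbf v[u/i]$ replaces the $i$-th entry by $u$ and $\{\!\{\cdot\}\!\}$ denotes a multiset; labels are compared as formal objects across graphs. $\mathsf{gwl}_k^{(t)}(G)=\{\!\{\mathsf{wl}_k^{(t)}(G,\mathbf v):\mathbf v\in V_G^k\}\!\}$ and $\rho_0(\mathsf{gwl}_k^{(t)})=\{(G,H):\mathsf{gwl}_k^{(t)}(G)=\mathsf{gwl}_k^{(t)}(H)\}$. *)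

theory Defs
  imports Complex_Main "HOL-Library.Multiset"
begin

record graph =
  edge :: "nat \<Rightarrow> nat \<Rightarrow> bool"
  col  :: "nat \<Rightarrow> nat \<Rightarrow> real"     \<comment> \<open>col G v s = s-th coordinate of col_G(v)\<close>

text \<open>The set of all graphs with V_G = {1..n}, undirected loopless edges, labels in R^l
  (coordinates 1..l; the representation is made canonical by requiring everything
  outside [n] resp. [l] to be trivial).\<close>
definition graphs :: "nat \<Rightarrow> nat \<Rightarrow> graph set" where
  "graphs n l = {G. (\<forall>u v. edge G u v \<longrightarrow> u \<in> {1..n} \<and> v \<in> {1..n} \<and> u \<noteq> v)
                  \<and> (\<forall>u v. edge G u v \<longrightarrow> edge G v u)
                  \<and> (\<forall>v s. col G v s \<noteq> 0 \<longrightarrow> v \<in> {1..n} \<and> s \<in> {1..l})}"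

text \<open>Index variables are x_i, represented by the natural number i.
  A function symbol is a HOL function on real lists; Omega is a set of pairs (p, f)
  meaning f : R^p \<rightarrow> R.\<close>
datatype tlexpr =
    EqInd nat nat
  | NeqInd nat nat
  | EdgeAt nat nat
  | Lab nat nat
  | Mul tlexpr tlexpr
  | Plus tlexpr tlexpr
  | Scal real tlexpr
  | App "real list \<Rightarrow> real" "tlexpr list"
  | Sum nat tlexpr

fun free_vars :: "tlexpr \<Rightarrow> nat set" where
  "free_vars (EqInd x y) = {x, y}"
| "free_vars (NeqInd x y) = {x, y}"
| "free_vars (EdgeAt x y) = {x, y}"
| "free_vars (Lab s x) = {x}"
| "free_vars (Mul a b) = free_vars a \<union> free_vars b"
| "free_vars (Plus a b) = free_vars a \<union> free_vars b"
| "free_vars (Scal c a) = free_vars a"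
| "free_vars (App f as) = (\<Union>a\<in>set as. free_vars a)"
| "free_vars (Sum x a) = free_vars a - {x}"

fun all_vars :: "tlexpr \<Rightarrow> nat set" where
  "all_vars (EqInd x y) = {x, y}"
| "all_vars (NeqInd x y) = {x, y}"
| "all_vars (EdgeAt x y) = {x, y}"
| "all_vars (Lab s x) = {x}"
| "all_vars (Mul a b) = all_vars a \<union> all_vars b"
| "all_vars (Plus a b) = all_vars a \<union> all_vars b"
| "all_vars (Scal c a) = all_vars a"
| "all_vars (App f as) = (\<Union>a\<in>set as. all_vars a)"
| "all_vars (Sum x a) = insert x (all_vars a)"

fun sd :: "tlexpr \<Rightarrow> nat" where
  "sd (EqInd x y) = 0"
| "sd (NeqInd x y) = 0"
| "sd (EdgeAt x y) = 0"
| "sd (Lab s x) = 0"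
| "sd (Mul a b) = max (sd a) (sd b)"
| "sd (Plus a b) = max (sd a) (sd b)"
| "sd (Scal c a) = sd a"
| "sd (App f as) = fold max (map sd as) 0"
| "sd (Sum x a) = Suc (sd a)"

fun wf_tl :: "nat \<Rightarrow> (nat \<times> (real list \<Rightarrow> real)) set \<Rightarrow> tlexpr \<Rightarrow> bool" where
  "wf_tl l \<Omega> (EqInd x y) = True"
| "wf_tl l \<Omega> (NeqInd x y) = True"
| "wf_tl l \<Omega> (EdgeAt x y) = True"
| "wf_tl l \<Omega> (Lab s x) = (s \<in> {1..l})"
| "wf_tl l \<Omega> (Mul a b) = (wf_tl l \<Omega> a \<and> wf_tl l \<Omega> b)"
| "wf_tl l \<Omega> (Plus a b) = (wf_tl l \<Omega> a \<and> wf_tl l \<Omega> b)"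
| "wf_tl l \<Omega> (Scal c a) = wf_tl l \<Omega> a"
| "wf_tl l \<Omega> (App f as) = ((length as, f) \<in> \<Omega> \<and> (\<forall>a\<in>set as. wf_tl l \<Omega> a))"
| "wf_tl l \<Omega> (Sum x a) = wf_tl l \<Omega> a"

text \<open>TL_k^{(t)}(Omega): well-formed expressions using only variables x_1..x_k,
  of summation depth at most t.\<close>
definition TL :: "nat \<Rightarrow> (nat \<times> (real list \<Rightarrow> real)) set \<Rightarrow> nat \<Rightarrow> nat \<Rightarrow> tlexpr set" where
  "TL l \<Omega> k t = {\<phi>. wf_tl l \<Omega> \<phi> \<and> all_vars \<phi> \<subseteq> {1..k} \<and> sd \<phi> \<le> t}"

fun sem :: "nat \<Rightarrow> graph \<Rightarrow> (nat \<Rightarrow> nat) \<Rightarrow> tlexpr \<Rightarrow> real" where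
  "sem n G \<nu> (EqInd x y) = (if \<nu> x = \<nu> y then 1 else 0)"
| "sem n G \<nu> (NeqInd x y) = (if \<nu> x \<noteq> \<nu> y then 1 else 0)"
| "sem n G \<nu> (EdgeAt x y) = (if edge G (\<nu> x) (\<nu> y) then 1 else 0)"
| "sem n G \<nu> (Lab s x) = col G (\<nu> x) s"
| "sem n G \<nu> (Mul a b) = sem n G \<nu> a * sem n G \<nu> b"
| "sem n G \<nu> (Plus a b) = sem n G \<nu> a + sem n G \<nu> b"
| "sem n G \<nu> (Scal c a) = c * sem n G \<nu> a"
| "sem n G \<nu> (App f as) = f (map (sem n G \<nu>) as)"
| "sem n G \<nu> (Sum x a) = (\<Sum>v\<in>{1..n}. sem n G (\<nu>(x := v)) a)"

text \<open>rho_0(L): pairs of graphs agreeing on all closed expressions of L.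
  For closed expressions the valuation is irrelevant; we quantify over all valuations
  into V_G = [n].\<close>
definition rho0_TL :: "nat \<Rightarrow> nat \<Rightarrow> tlexpr set \<Rightarrow> (graph \<times> graph) set" where
  "rho0_TL n l L = {(G, H). G \<in> graphs n l \<and> H \<in> graphs n l \<and>
      (\<forall>\<phi>\<in>L. free_vars \<phi> = {} \<longrightarrow>
         (\<forall>\<nu>. range \<nu> \<subseteq> {1..n} \<longrightarrow> sem n G \<nu> \<phi> = sem n H \<nu> \<phi>))}"

definition atp :: "nat \<Rightarrow> graph \<Rightarrow> nat list \<Rightarrow> (bool \<times> bool) list \<times> real list list" where
  "atp l G v = (concat (map (\<lambda>i. map (\<lambda>j. (v!i = v!j, edge G (v!i) (v!j))) [Suc i..<length v])
                             [0..<length v]),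
                map (\<lambda>x. map (\<lambda>s. col G x s) [1..<Suc l]) v)"

datatype wlcol =
    Base "(bool \<times> bool) list \<times> real list list"
  | Refine wlcol "(((bool \<times> bool) list \<times> real list list) \<times> wlcol list) multiset"

fun wl :: "nat \<Rightarrow> nat \<Rightarrow> graph \<Rightarrow> nat \<Rightarrow> nat list \<Rightarrow> wlcol" where
  "wl n l G 0 v = Base (atp l G v)"
| "wl n l G (Suc t) v = Refine (wl n l G t v)
     (image_mset (\<lambda>u. (atp l G (v @ [u]), map (\<lambda>i. wl n l G t (v[i := u])) [0..<length v]))
        (mset_set {1..n}))"

definition tuples :: "nat \<Rightarrow> nat \<Rightarrow> nat list set" where
  "tuples n k = {v. length v = k \<and> set v \<subseteq> {1..n}}"

definition gwl :: "nat \<Rightarrow> nat \<Rightarrow> nat \<Rightarrow> nat \<Rightarrow> graph \<Rightarrow> wlcol multiset" where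
  "gwl n l k t G = image_mset (wl n l G t) (mset_set (tuples n k))"

definition rho0_gwl :: "nat \<Rightarrow> nat \<Rightarrow> nat \<Rightarrow> nat \<Rightarrow> (graph \<times> graph) set" where
  "rho0_gwl n l k t = {(G, H). G \<in> graphs n l \<and> H \<in> graphs n l \<and> gwl n l k t G = gwl n l k t H}"

end

theory Submission
  imports Defs
begin


fun ren :: "(nat \<Rightarrow> nat) \<Rightarrow> tlexpr \<Rightarrow> tlexpr" where
  "ren f (EqInd x y) = EqInd (f x) (f y)"
| "ren f (NeqInd x y) = NeqInd (f x) (f y)"
| "ren f (EdgeAt x y) = EdgeAt (f x) (f y)"
| "ren f (Lab s x) = Lab s (f x)"
| "ren f (Mul a b) = Mul (ren f a) (ren f b)"
| "ren f (Plus a b) = Plus (ren f a) (ren f b)"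
| "ren f (Scal c a) = Scal c (ren f a)"
| "ren f (App g as) = App g (map (ren f) as)"
| "ren f (Sum x a) = Sum (f x) (ren f a)"

lemma sem_ren: "inj f \<Longrightarrow> sem n G \<nu> (ren f \<phi>) = sem n G (\<nu> \<circ> f) \<phi>"
proof (induction \<phi> arbitrary: \<nu>)
  case (App g as) thus ?case by (simp add: comp_def cong: map_cong)
next
  case (Sum x a)
  have "\<And>v. (\<nu>(f x := v)) \<circ> f = (\<nu> \<circ> f)(x := v)" using Sum.prems by (auto simp: inj_eq)
  thus ?case by (simp only: sem.simps ren.simps Sum.IH Sum.prems)
qed auto

lemma free_ren: "inj f \<Longrightarrow> free_vars (ren f \<phi>) = f ` free_vars \<phi>"
  by (induction \<phi>) (auto simp: inj_eq image_Un)

lemma all_vars_ren: "all_vars (ren f \<phi>) = f ` all_vars \<phi>"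
  by (induction \<phi>) auto

lemma fold_max_le: "fold max xs (b::nat) \<le> t \<longleftrightarrow> b \<le> t \<and> (\<forall>x\<in>set xs. x \<le> t)"
  by (induction xs arbitrary: b) auto

lemma sd_ren: "sd (ren f \<phi>) = sd \<phi>"
proof (induction \<phi>)
  case (App g as)
  hence "map sd (map (ren f) as) = map sd as" by auto
  thus ?case by (simp only: sd.simps ren.simps)
qed auto

lemma wf_ren: "wf_tl l \<Omega> (ren f \<phi>) = wf_tl l \<Omega> \<phi>"
  by (induction \<phi>) auto



lemma graph_sym: "X \<in> graphs n l \<Longrightarrow> edge X u v = edge X v u"
  unfolding graphs_def by blast

lemma graph_noloop: "X \<in> graphs n l \<Longrightarrow> \<not> edge X u u"
  unfolding graphs_def by blast

lemma concat_inj: "map length xs = map length ys \<Longrightarrow> concat xs = concat ys \<Longrightarrow> xs = ys"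
proof (induction xs arbitrary: ys)
  case Nil thus ?case by simp
next
  case (Cons x xs)
  then obtain y ys' where ys: "ys = y # ys'" by (cases ys) auto
  with Cons.prems have "length x = length y" "map length xs = map length ys'" by auto
  moreover have "x @ concat xs = y @ concat ys'" using Cons.prems ys by simp
  ultimately show ?case using Cons.IH ys by (simp add: append_eq_append_conv)
qed

lemma atp_pair:
  assumes "atp l X a = atp l Y b" "length a = length b" "i < j" "j < length a"
  shows "(a!i = a!j) = (b!i = b!j) \<and> edge X (a!i) (a!j) = edge Y (b!i) (b!j)"
proof -
  let ?m = "length a"
  define fX where "fX = (\<lambda>i. map (\<lambda>j. (a!i = a!j, edge X (a!i) (a!j))) [Suc i..<?m])"
  define fY where "fY = (\<lambda>i. map (\<lambda>j. (b!i = b!j, edge Y (b!i) (b!j))) [Suc i..<?m])"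
  have "concat (map fX [0..<?m]) = concat (map fY [0..<?m])"
    using assms(1,2) unfolding atp_def fX_def fY_def by simp
  moreover have "map length (map fX [0..<?m]) = map length (map fY [0..<?m])"
    unfolding fX_def fY_def by simp
  ultimately have "map fX [0..<?m] = map fY [0..<?m]" using concat_inj by blast
  hence "fX i = fY i" using assms(3,4)
    by (metis (no_types, lifting) add_0 diff_zero dual_order.strict_trans length_map length_upt nth_map nth_upt)
  hence "fX i ! (j - Suc i) = fY i ! (j - Suc i)" by simp
  moreover have "[Suc i..<length a] ! (j - Suc i) = j" using assms(3,4) by simp
  ultimately show ?thesis using assms(3,4) unfolding fX_def fY_def by simp
qed

lemma atp_nth:
  assumes G: "X \<in> graphs n l" "Y \<in> graphs n l" and "atp l X a = atp l Y b" "length a = length b"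
    "i < length a" "j < length a"
  shows "(a!i = a!j) = (b!i = b!j)" "edge X (a!i) (a!j) = edge Y (b!i) (b!j)"
proof -
  have "(a!i = a!j) = (b!i = b!j) \<and> edge X (a!i) (a!j) = edge Y (b!i) (b!j)"
  proof (cases i j rule: linorder_cases)
    case less thus ?thesis using atp_pair[OF assms(3,4)] assms by blast
  next
    case equal thus ?thesis using graph_noloop[OF G(1)] graph_noloop[OF G(2)] by simp
  next
    case greater
    hence "(a!j = a!i) = (b!j = b!i) \<and> edge X (a!j) (a!i) = edge Y (b!j) (b!i)"
      using atp_pair[OF assms(3,4)] assms by blast
    thus ?thesis using graph_sym[OF G(1)] graph_sym[OF G(2)] by metis
  qed
  thus "(a!i = a!j) = (b!i = b!j)" "edge X (a!i) (a!j) = edge Y (b!i) (b!j)" by auto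
qed

lemma atp_col:
  assumes "atp l X a = atp l Y b" "length a = length b" "i < length a" "s \<in> {1..l}"
  shows "col X (a!i) s = col Y (b!i) s"
proof -
  define xs where "xs = [1..<Suc l]"
  have "map (\<lambda>x. map (\<lambda>s. col X x s) xs) a = map (\<lambda>x. map (\<lambda>s. col Y x s) xs) b"
    using assms(1) unfolding atp_def xs_def by simp
  hence "map (\<lambda>x. map (\<lambda>s. col X x s) xs) a ! i = map (\<lambda>x. map (\<lambda>s. col Y x s) xs) b ! i"
    by simp
  hence "map (\<lambda>s. col X (a!i) s) xs = map (\<lambda>s. col Y (b!i) s) xs"
    using assms(2,3) by simp
  hence "map (\<lambda>s. col X (a!i) s) xs ! (s - 1) = map (\<lambda>s. col Y (b!i) s) xs ! (s - 1)"
    by (rule arg_cong)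
  moreover have "xs ! (s - 1) = s" "s - 1 < length xs" using assms(4) unfolding xs_def by (auto simp del: upt_Suc)
  ultimately show ?thesis by simp
qed

lemma atp_eqI:
  assumes "length a = length b"
    "\<forall>i<length a. \<forall>j<length a. (a!i = a!j) = (b!i = b!j) \<and> edge X (a!i) (a!j) = edge Y (b!i) (b!j)"
    "\<forall>i<length a. \<forall>s\<in>{1..l}. col X (a!i) s = col Y (b!i) s"
  shows "atp l X a = atp l Y b"
proof -
  have 1: "map (\<lambda>i. map (\<lambda>j. (a!i = a!j, edge X (a!i) (a!j))) [Suc i..<length a]) [0..<length a]
     = map (\<lambda>i. map (\<lambda>j. (b!i = b!j, edge Y (b!i) (b!j))) [Suc i..<length b]) [0..<length b]"
    using assms(1,2) by (auto intro!: map_cong)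
  have 2: "map (\<lambda>x. map (\<lambda>s. col X x s) [1..<Suc l]) a = map (\<lambda>x. map (\<lambda>s. col Y x s) [1..<Suc l]) b"
  proof (rule nth_equalityI)
    show "length (map (\<lambda>x. map (\<lambda>s. col X x s) [1..<Suc l]) a) = length (map (\<lambda>x. map (\<lambda>s. col Y x s) [1..<Suc l]) b)"
      using assms(1) by simp
  next
    fix i assume "i < length (map (\<lambda>x. map (\<lambda>s. col X x s) [1..<Suc l]) a)"
    hence i: "i < length a" by simp
    have "map (\<lambda>s. col X (a!i) s) [1..<Suc l] = map (\<lambda>s. col Y (b!i) s) [1..<Suc l]"
      using assms(3) i by (intro map_cong) auto
    thus "map (\<lambda>x. map (\<lambda>s. col X x s) [1..<Suc l]) a ! i = map (\<lambda>x. map (\<lambda>s. col Y x s) [1..<Suc l]) b ! i"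
      using i assms(1) by (simp del: upt_Suc)
  qed
  show ?thesis unfolding atp_def using 1 2 by simp
qed

lemma sum_ind_count:
  "finite A \<Longrightarrow> (\<Sum>u\<in>A. if h u = e then 1 else 0 :: real) = real (count (image_mset h (mset_set A)) e)"
  by (induction A rule: finite_induct) auto

lemma sum_det:
  fixes FX FY :: "'a \<Rightarrow> real"
  assumes fin: "finite A" "finite B"
    and M: "image_mset hX (mset_set A) = image_mset hY (mset_set B)"
    and cross: "\<And>a b. a \<in> A \<Longrightarrow> b \<in> B \<Longrightarrow> hX a = hY b \<Longrightarrow> FX a = FY b"
  shows "sum FX A = sum FY B"
proof -
  have "set_mset (image_mset hX (mset_set A)) = set_mset (image_mset hY (mset_set B))"
    using M by (rule arg_cong)
  hence S: "hX ` A = hY ` B" using fin by (simp only: set_image_mset finite_set_mset_mset_set)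
  define c where "c z = FY (SOME b. b \<in> B \<and> hY b = z)" for z
  have cY: "c (hY b) = FY b" if "b \<in> B" for b
  proof -
    have ex: "\<exists>b'. b' \<in> B \<and> hY b' = hY b" using that by blast
    let ?b = "SOME b'. b' \<in> B \<and> hY b' = hY b"
    have b: "?b \<in> B" "hY ?b = hY b" using someI_ex[OF ex] by auto
    have "hY b \<in> hX ` A" using imageI[OF that, of hY] unfolding S .
    then obtain a where a0: "hY b = hX a" "a \<in> A" by (rule imageE)
    hence a: "a \<in> A" "hX a = hY b" by auto
    have "FX a = FY ?b" using cross[OF a(1) b(1)] a b by simp
    moreover have "FX a = FY b" using cross[OF a(1) that a(2)] .
    ultimately show ?thesis unfolding c_def by simp
  qed
  have cX: "c (hX a) = FX a" if "a \<in> A" for a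
  proof -
    have "hX a \<in> hY ` B" using imageI[OF that, of hX] unfolding S .
    then obtain b where b0: "hX a = hY b" "b \<in> B" by (rule imageE)
    hence b: "b \<in> B" "hY b = hX a" by auto
    show ?thesis using cY[OF b(1)] cross[OF that b(1)] b(2) by simp
  qed
  have "sum FX A = sum (c \<circ> hX) A" using cX by simp
  also have "\<dots> = sum_mset (image_mset (c \<circ> hX) (mset_set A))"
    by (rule sum_unfold_sum_mset)
  also have "image_mset (c \<circ> hX) (mset_set A) = image_mset c (image_mset hX (mset_set A))"
    by (simp only: image_mset.compositionality)
  also have "\<dots> = image_mset c (image_mset hY (mset_set B))" using M by (rule arg_cong)
  also have "\<dots> = image_mset (c \<circ> hY) (mset_set B)"
    by (simp only: image_mset.compositionality)
  also have "sum_mset \<dots> = sum (c \<circ> hY) B"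
    by (rule sum_unfold_sum_mset[symmetric])
  also have "\<dots> = sum FY B" using cY by simp
  finally show ?thesis .
qed

lemma tuples_Suc: "tuples n (Suc m) = (\<lambda>(u, v). u # v) ` ({1..n} \<times> tuples n m)"
  unfolding tuples_def by (auto simp: length_Suc_conv image_iff)

lemma finite_tuples: "finite (tuples n m)"
proof -
  have "tuples n m = {xs. set xs \<subseteq> {1..n} \<and> length xs = m}" unfolding tuples_def by auto
  thus ?thesis using finite_lists_length_eq[of "{1..n}" m] by simp
qed

lemma card_tuples: "card (tuples n m) = n ^ m"
proof -
  have "tuples n m = {xs. set xs \<subseteq> {1..n} \<and> length xs = m}" unfolding tuples_def by auto
  thus ?thesis using card_lists_length_eq[of "{1..n}" m] by simp
qed

lemma sum_tuples_Suc:
  "(\<Sum>w\<in>tuples n (Suc m). g w) = (\<Sum>u\<in>{1..n}. \<Sum>v\<in>tuples n m. g (u # v))"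
proof -
  have inj: "inj_on (\<lambda>(u, v). u # v) ({1..n} \<times> tuples n m)" by (auto simp: inj_on_def)
  have "(\<Sum>w\<in>tuples n (Suc m). g w) = (\<Sum>p\<in>{1..n} \<times> tuples n m. g (case p of (u, v) \<Rightarrow> u # v))"
    unfolding tuples_Suc by (subst sum.reindex[OF inj]) (simp add: comp_def)
  also have "\<dots> = (\<Sum>u\<in>{1..n}. \<Sum>v\<in>tuples n m. g (u # v))"
    by (simp add: sum.cartesian_product split_def)
  finally show ?thesis .
qed

lemma sum_tuples_hd:
  "(\<Sum>w\<in>tuples n (Suc m). (f (w!0) :: real)) = real (n ^ m) * (\<Sum>u\<in>{1..n}. f u)"
proof -
  have "(\<Sum>w\<in>tuples n (Suc m). (f (w!0) :: real)) = (\<Sum>u\<in>{1..n}. \<Sum>v\<in>tuples n m. f u)"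
    by (simp only: sum_tuples_Suc nth_Cons_0)
  also have "\<dots> = (\<Sum>u\<in>{1..n}. real (n ^ m) * f u)"
    by (simp only: sum_constant card_tuples of_nat_id)
  also have "\<dots> = real (n ^ m) * (\<Sum>u\<in>{1..n}. f u)"
    by (simp only: sum_distrib_left)
  finally show ?thesis .
qed

fun upds :: "(nat \<Rightarrow> nat) \<Rightarrow> nat list \<Rightarrow> nat list \<Rightarrow> (nat \<Rightarrow> nat)" where
  "upds \<nu> [] w = \<nu>"
| "upds \<nu> (x # xs) w = upds (\<nu>(x := hd w)) xs (tl w)"

fun sumsE :: "nat list \<Rightarrow> tlexpr \<Rightarrow> tlexpr" where
  "sumsE [] \<phi> = \<phi>"
| "sumsE (x # xs) \<phi> = Sum x (sumsE xs \<phi>)"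

lemma sem_sums:
  "sem n Z \<nu> (sumsE xs \<phi>) = (\<Sum>w\<in>tuples n (length xs). sem n Z (upds \<nu> xs w) \<phi>)"
proof (induction xs arbitrary: \<nu>)
  case Nil
  have "tuples n 0 = {[]}" unfolding tuples_def by auto
  thus ?case by simp
next
  case (Cons x xs)
  have "sem n Z \<nu> (sumsE (x#xs) \<phi>) = (\<Sum>u\<in>{1..n}. \<Sum>w\<in>tuples n (length xs). sem n Z (upds (\<nu>(x:=u)) xs w) \<phi>)"
    by (simp only: sumsE.simps sem.simps Cons.IH atLeastAtMost_iff)
  also have "\<dots> = (\<Sum>w\<in>tuples n (length (x#xs)). sem n Z (upds \<nu> (x#xs) w) \<phi>)"
    by (simp only: length_Cons sum_tuples_Suc upds.simps list.sel)
  finally show ?case .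
qed

lemma upds_notin: "y \<notin> set xs \<Longrightarrow> upds \<nu> xs w y = \<nu> y"
  by (induction xs arbitrary: \<nu> w) auto

lemma upds_map: "distinct xs \<Longrightarrow> length w = length xs \<Longrightarrow> map (upds \<nu> xs w) xs = w"
proof (induction xs arbitrary: \<nu> w)
  case Nil thus ?case by simp
next
  case (Cons x xs)
  then obtain u w' where w: "w = u # w'" by (cases w) auto
  thus ?case using Cons by (simp add: upds_notin)
qed

lemma upds_range: "range \<nu> \<subseteq> A \<Longrightarrow> set w \<subseteq> A \<Longrightarrow> length w = length xs \<Longrightarrow> range (upds \<nu> xs w) \<subseteq> A"
proof (induction xs arbitrary: \<nu> w)
  case Nil thus ?case by simp
next
  case (Cons x xs)
  then obtain u w' where w: "w = u # w'" by (cases w) auto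
  have "range (\<nu>(x := u)) \<subseteq> A" using Cons.prems w by auto
  thus ?case using Cons w by simp
qed

lemma free_sums: "free_vars (sumsE xs \<phi>) = free_vars \<phi> - set xs"
  by (induction xs) auto
lemma all_vars_sums: "all_vars (sumsE xs \<phi>) = all_vars \<phi> \<union> set xs"
  by (induction xs) auto
lemma sd_sums: "sd (sumsE xs \<phi>) = sd \<phi> + length xs"
  by (induction xs) auto
lemma wf_sums: "wf_tl l \<Omega> (sumsE xs \<phi>) = wf_tl l \<Omega> \<phi>"
  by (induction xs) auto



definition agr :: "nat \<Rightarrow> (nat \<Rightarrow> nat) \<Rightarrow> nat list \<Rightarrow> nat list \<Rightarrow> (nat \<Rightarrow> nat) \<Rightarrow> (nat \<Rightarrow> nat) \<Rightarrow> tlexpr \<Rightarrow> bool" where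
  "agr m \<pi> aX aY \<nu>X \<nu>Y \<phi> \<longleftrightarrow> (\<forall>x\<in>free_vars \<phi>. \<pi> x < m \<and> \<nu>X x = aX ! \<pi> x \<and> \<nu>Y x = aY ! \<pi> x)"

lemma agr_sub: "free_vars \<psi> \<subseteq> free_vars \<phi> \<Longrightarrow> agr m \<pi> aX aY \<nu>X \<nu>Y \<phi> \<Longrightarrow> agr m \<pi> aX aY \<nu>X \<nu>Y \<psi>"
  unfolding agr_def by blast

lemma free_sub_all: "free_vars \<phi> \<subseteq> all_vars \<phi>"
  by (induction \<phi>) auto

lemma gen:
  assumes G: "X \<in> graphs n l" "Y \<in> graphs n l" and len: "length aX = m" "length aY = m"
    and at: "atp l X aX = atp l Y aY"
    and hs: "\<And>y \<chi> \<pi> \<nu>X \<nu>Y. sd (Sum y \<chi>) \<le> t \<Longrightarrow> wf_tl l \<Omega> (Sum y \<chi>) \<Longrightarrow> all_vars (Sum y \<chi>) \<subseteq> V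
        \<Longrightarrow> agr m \<pi> aX aY \<nu>X \<nu>Y (Sum y \<chi>) \<Longrightarrow> sem n X \<nu>X (Sum y \<chi>) = sem n Y \<nu>Y (Sum y \<chi>)"
  shows "sd \<phi> \<le> t \<Longrightarrow> wf_tl l \<Omega> \<phi> \<Longrightarrow> all_vars \<phi> \<subseteq> V \<Longrightarrow> agr m \<pi> aX aY \<nu>X \<nu>Y \<phi>
     \<Longrightarrow> sem n X \<nu>X \<phi> = sem n Y \<nu>Y \<phi>"
proof (induction \<phi>)
  case (EqInd x y)
  hence h: "\<pi> x < m" "\<pi> y < m" "\<nu>X x = aX ! \<pi> x" "\<nu>X y = aX ! \<pi> y"
    "\<nu>Y x = aY ! \<pi> x" "\<nu>Y y = aY ! \<pi> y" unfolding agr_def by auto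
  have "(aX ! \<pi> x = aX ! \<pi> y) = (aY ! \<pi> x = aY ! \<pi> y)"
    by (rule atp_nth(1)[OF G at]) (use len h in auto)
  thus ?case using h by simp
next
  case (NeqInd x y)
  hence h: "\<pi> x < m" "\<pi> y < m" "\<nu>X x = aX ! \<pi> x" "\<nu>X y = aX ! \<pi> y"
    "\<nu>Y x = aY ! \<pi> x" "\<nu>Y y = aY ! \<pi> y" unfolding agr_def by auto
  have "(aX ! \<pi> x = aX ! \<pi> y) = (aY ! \<pi> x = aY ! \<pi> y)"
    by (rule atp_nth(1)[OF G at]) (use len h in auto)
  thus ?case using h by simp
next
  case (EdgeAt x y)
  hence h: "\<pi> x < m" "\<pi> y < m" "\<nu>X x = aX ! \<pi> x" "\<nu>X y = aX ! \<pi> y"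
    "\<nu>Y x = aY ! \<pi> x" "\<nu>Y y = aY ! \<pi> y" unfolding agr_def by auto
  have "edge X (aX ! \<pi> x) (aX ! \<pi> y) = edge Y (aY ! \<pi> x) (aY ! \<pi> y)"
    by (rule atp_nth(2)[OF G at]) (use len h in auto)
  thus ?case using h by simp
next
  case (Lab s x)
  hence h: "\<pi> x < m" "\<nu>X x = aX ! \<pi> x" "\<nu>Y x = aY ! \<pi> x" "s \<in> {1..l}"
    unfolding agr_def by auto
  have "col X (aX ! \<pi> x) s = col Y (aY ! \<pi> x) s"
    by (rule atp_col[OF at]) (use len h in auto)
  thus ?case using h by simp
next
  case (Mul a b)
  have "agr m \<pi> aX aY \<nu>X \<nu>Y a" "agr m \<pi> aX aY \<nu>X \<nu>Y b"
    using Mul.prems(4) by (auto intro: agr_sub[of _ "Mul a b"])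
  thus ?case using Mul.IH Mul.prems(1-3) by simp
next
  case (Plus a b)
  have "agr m \<pi> aX aY \<nu>X \<nu>Y a" "agr m \<pi> aX aY \<nu>X \<nu>Y b"
    using Plus.prems(4) by (auto intro: agr_sub[of _ "Plus a b"])
  thus ?case using Plus.IH Plus.prems(1-3) by simp
next
  case (Scal c a)
  have "agr m \<pi> aX aY \<nu>X \<nu>Y a" using Scal.prems(4) by (simp add: agr_def)
  thus ?case using Scal.IH Scal.prems(1-3) by simp
next
  case (App f as)
  have "map (sem n X \<nu>X) as = map (sem n Y \<nu>Y) as"
  proof (rule map_cong)
    fix a assume a: "a \<in> set as"
    show "sem n X \<nu>X a = sem n Y \<nu>Y a"
    proof (rule App.IH[OF a])
      show "sd a \<le> t" using App.prems(1) a by (simp add: fold_max_le)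
      show "wf_tl l \<Omega> a" using App.prems(2) a by simp
      show "all_vars a \<subseteq> V" using App.prems(3) a by auto
      show "agr m \<pi> aX aY \<nu>X \<nu>Y a" by (rule agr_sub[OF _ App.prems(4)]) (use a in auto)
    qed
  qed simp
  thus ?case by (simp only: sem.simps)
next
  case (Sum y \<chi>)
  show ?case by (rule hs[OF Sum.prems])
qed

lemma wl_atp: "wl n l X t w = wl n l Y t w' \<Longrightarrow> atp l X w = atp l Y w'"
  by (induction t) auto

definition PB :: "nat \<Rightarrow> nat \<Rightarrow> nat \<Rightarrow> (nat \<times> (real list \<Rightarrow> real)) set \<Rightarrow> nat \<Rightarrow> bool" where
  "PB n l k \<Omega> t \<longleftrightarrow> (\<forall>X Y wX wY \<phi> \<pi> \<nu>X \<nu>Y. X \<in> graphs n l \<longrightarrow> Y \<in> graphs n l \<longrightarrow>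
     wX \<in> tuples n k \<longrightarrow> wY \<in> tuples n k \<longrightarrow> wl n l X t wX = wl n l Y t wY \<longrightarrow>
     sd \<phi> \<le> t \<longrightarrow> wf_tl l \<Omega> \<phi> \<longrightarrow> all_vars \<phi> \<subseteq> {1..k+1} \<longrightarrow> agr k \<pi> wX wY \<nu>X \<nu>Y \<phi> \<longrightarrow>
     sem n X \<nu>X \<phi> = sem n Y \<nu>Y \<phi>)"

definition PA :: "nat \<Rightarrow> nat \<Rightarrow> nat \<Rightarrow> (nat \<times> (real list \<Rightarrow> real)) set \<Rightarrow> nat \<Rightarrow> bool" where
  "PA n l k \<Omega> t \<longleftrightarrow> (\<forall>X Y wX wY uX uY \<phi> \<pi> \<nu>X \<nu>Y. X \<in> graphs n l \<longrightarrow> Y \<in> graphs n l \<longrightarrow>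
     wX \<in> tuples n k \<longrightarrow> wY \<in> tuples n k \<longrightarrow> uX \<in> {1..n} \<longrightarrow> uY \<in> {1..n} \<longrightarrow>
     atp l X (wX @ [uX]) = atp l Y (wY @ [uY]) \<longrightarrow> wl n l X t wX = wl n l Y t wY \<longrightarrow>
     (\<forall>i<k. wl n l X t (wX[i := uX]) = wl n l Y t (wY[i := uY])) \<longrightarrow>
     sd \<phi> \<le> t \<longrightarrow> wf_tl l \<Omega> \<phi> \<longrightarrow> all_vars \<phi> \<subseteq> {1..k+1} \<longrightarrow>
     agr (Suc k) \<pi> (wX @ [uX]) (wY @ [uY]) \<nu>X \<nu>Y \<phi> \<longrightarrow>
     sem n X \<nu>X \<phi> = sem n Y \<nu>Y \<phi>)"

lemma PB_D: "PB n l k \<Omega> t \<Longrightarrow> X \<in> graphs n l \<Longrightarrow> Y \<in> graphs n l \<Longrightarrow>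
     wX \<in> tuples n k \<Longrightarrow> wY \<in> tuples n k \<Longrightarrow> wl n l X t wX = wl n l Y t wY \<Longrightarrow>
     sd \<phi> \<le> t \<Longrightarrow> wf_tl l \<Omega> \<phi> \<Longrightarrow> all_vars \<phi> \<subseteq> {1..k+1} \<Longrightarrow> agr k \<pi> wX wY \<nu>X \<nu>Y \<phi> \<Longrightarrow>
     sem n X \<nu>X \<phi> = sem n Y \<nu>Y \<phi>"
  unfolding PB_def by blast

lemma PA_D: "PA n l k \<Omega> t \<Longrightarrow> X \<in> graphs n l \<Longrightarrow> Y \<in> graphs n l \<Longrightarrow>
     wX \<in> tuples n k \<Longrightarrow> wY \<in> tuples n k \<Longrightarrow> uX \<in> {1..n} \<Longrightarrow> uY \<in> {1..n} \<Longrightarrow>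
     atp l X (wX @ [uX]) = atp l Y (wY @ [uY]) \<Longrightarrow> wl n l X t wX = wl n l Y t wY \<Longrightarrow>
     (\<forall>i<k. wl n l X t (wX[i := uX]) = wl n l Y t (wY[i := uY])) \<Longrightarrow>
     sd \<phi> \<le> t \<Longrightarrow> wf_tl l \<Omega> \<phi> \<Longrightarrow> all_vars \<phi> \<subseteq> {1..k+1} \<Longrightarrow>
     agr (Suc k) \<pi> (wX @ [uX]) (wY @ [uY]) \<nu>X \<nu>Y \<phi> \<Longrightarrow>
     sem n X \<nu>X \<phi> = sem n Y \<nu>Y \<phi>"
  unfolding PA_def by blast

lemma card_free_sum:
  assumes "all_vars (Sum y \<chi>) \<subseteq> {1..k+1}"
  shows "card (free_vars (Sum y \<chi>)) \<le> k"
proof -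
  have "free_vars (Sum y \<chi>) \<subseteq> {1..k+1} - {y}" using assms free_sub_all[of \<chi>] by auto
  moreover have "card ({1..k+1} - {y}) = k" using assms by simp
  ultimately show ?thesis by (metis card_mono finite_Diff finite_atLeastAtMost)
qed

lemma exists_free_pos:
  assumes "card F \<le> k" "finite F"
  shows "\<exists>q < Suc k. q \<notin> \<pi> ` F"
proof (rule ccontr)
  assume "\<not> ?thesis"
  hence "{0..<Suc k} \<subseteq> \<pi> ` F" by auto
  hence "Suc k \<le> card (\<pi> ` F)" by (metis card_atLeastLessThan card_mono assms(2) finite_imageI diff_zero)
  also have "\<dots> \<le> card F" by (rule card_image_le[OF assms(2)])
  finally show False using assms(1) by simp
qed

lemma finite_free: "finite (free_vars \<phi>)"
  by (induction \<phi>) auto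

lemma A_of_B:
  assumes "PB n l k \<Omega> t"
  shows "PA n l k \<Omega> t"
  unfolding PA_def
proof (intro allI impI)
  fix X Y wX wY uX uY \<phi> \<pi> \<nu>X \<nu>Y
  assume G: "X \<in> graphs n l" "Y \<in> graphs n l" and w: "wX \<in> tuples n k" "wY \<in> tuples n k"
    and u: "uX \<in> {1..n}" "uY \<in> {1..n}"
    and at: "atp l X (wX @ [uX]) = atp l Y (wY @ [uY])" and wl0: "wl n l X t wX = wl n l Y t wY"
    and wli: "\<forall>i<k. wl n l X t (wX[i := uX]) = wl n l Y t (wY[i := uY])"
    and \<phi>: "sd \<phi> \<le> t" "wf_tl l \<Omega> \<phi>" "all_vars \<phi> \<subseteq> {1..k+1}"
    and ag: "agr (Suc k) \<pi> (wX @ [uX]) (wY @ [uY]) \<nu>X \<nu>Y \<phi>"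
  have lw: "length wX = k" "length wY = k" using w unfolding tuples_def by auto
  show "sem n X \<nu>X \<phi> = sem n Y \<nu>Y \<phi>"
  proof (rule gen[OF G _ _ at, of "Suc k" t \<Omega> "{1..k+1}"])
    show "length (wX @ [uX]) = Suc k" "length (wY @ [uY]) = Suc k" using lw by auto
  next
    fix y \<chi> \<pi>' \<nu>X' \<nu>Y'
    assume s: "sd (Sum y \<chi>) \<le> t" "wf_tl l \<Omega> (Sum y \<chi>)" "all_vars (Sum y \<chi>) \<subseteq> {1..k+1}"
      and ag': "agr (Suc k) \<pi>' (wX @ [uX]) (wY @ [uY]) \<nu>X' \<nu>Y' (Sum y \<chi>)"
    let ?F = "free_vars (Sum y \<chi>)"
    obtain q where q: "q < Suc k" "q \<notin> \<pi>' ` ?F"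
      using exists_free_pos[OF card_free_sum[OF s(3)] finite_free] by blast
    show "sem n X \<nu>X' (Sum y \<chi>) = sem n Y \<nu>Y' (Sum y \<chi>)"
    proof (cases "q = k")
      case True
      have "agr k \<pi>' wX wY \<nu>X' \<nu>Y' (Sum y \<chi>)"
        unfolding agr_def
      proof
        fix x assume x: "x \<in> ?F"
        hence px: "\<pi>' x < k" using ag' q True unfolding agr_def
          by (metis image_eqI less_SucE)
        thus "\<pi>' x < k \<and> \<nu>X' x = wX ! \<pi>' x \<and> \<nu>Y' x = wY ! \<pi>' x"
          using ag' x lw unfolding agr_def by (auto simp: nth_append)
      qed
      thus ?thesis by (rule PB_D[OF assms G w wl0 s])
    next
      case False
      hence qk: "q < k" using q by simp
      define \<pi>2 where "\<pi>2 x = (if \<pi>' x = k then q else \<pi>' x)" for x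
      have ag2: "agr k \<pi>2 (wX[q := uX]) (wY[q := uY]) \<nu>X' \<nu>Y' (Sum y \<chi>)"
        unfolding agr_def
      proof
        fix x assume x: "x \<in> ?F"
        have px: "\<pi>' x < Suc k" "\<pi>' x \<noteq> q" using ag' x q unfolding agr_def by (auto simp: image_iff)
        show "\<pi>2 x < k \<and> \<nu>X' x = wX[q := uX] ! \<pi>2 x \<and> \<nu>Y' x = wY[q := uY] ! \<pi>2 x"
        proof (cases "\<pi>' x = k")
          case True
          thus ?thesis using ag' x lw qk unfolding agr_def \<pi>2_def by (auto simp: nth_append)
        next
          case False
          hence "\<pi>' x < k" using px by simp
          thus ?thesis using ag' x lw qk px(2) False unfolding agr_def \<pi>2_def by (auto simp: nth_append)
        qed
      qed
      have tX: "wX[q := uX] \<in> tuples n k" and tY: "wY[q := uY] \<in> tuples n k"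
        using w u unfolding tuples_def by (auto dest: subsetD[OF set_update_subset_insert])
      show ?thesis by (rule PB_D[OF assms G tX tY wli[rule_format, OF qk] s ag2])
    qed
  qed (use \<phi> ag in auto)
qed

lemma B_of_A:
  assumes "\<And>t'. t = Suc t' \<Longrightarrow> PA n l k \<Omega> t'"
  shows "PB n l k \<Omega> t"
  unfolding PB_def
proof (intro allI impI)
  fix X Y wX wY \<phi> \<pi> \<nu>X \<nu>Y
  assume G: "X \<in> graphs n l" "Y \<in> graphs n l" and w: "wX \<in> tuples n k" "wY \<in> tuples n k"
    and wlt: "wl n l X t wX = wl n l Y t wY"
    and \<phi>: "sd \<phi> \<le> t" "wf_tl l \<Omega> \<phi>" "all_vars \<phi> \<subseteq> {1..k+1}"
    and ag: "agr k \<pi> wX wY \<nu>X \<nu>Y \<phi>"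
  have lw: "length wX = k" "length wY = k" using w unfolding tuples_def by auto
  show "sem n X \<nu>X \<phi> = sem n Y \<nu>Y \<phi>"
  proof (rule gen[OF G lw wl_atp[OF wlt], of t \<Omega> "{1..k+1}"])
    fix y \<chi> \<pi>' \<nu>X' \<nu>Y'
    assume s: "sd (Sum y \<chi>) \<le> t" "wf_tl l \<Omega> (Sum y \<chi>)" "all_vars (Sum y \<chi>) \<subseteq> {1..k+1}"
      and ag': "agr k \<pi>' wX wY \<nu>X' \<nu>Y' (Sum y \<chi>)"
    obtain t' where t: "t = Suc t'" using s(1) by (cases t) auto
    have PA: "PA n l k \<Omega> t'" using assms t by blast
    define hX where "hX u = (atp l X (wX @ [u]), map (\<lambda>i. wl n l X t' (wX[i := u])) [0..<k])" for u
    define hY where "hY u = (atp l Y (wY @ [u]), map (\<lambda>i. wl n l Y t' (wY[i := u])) [0..<k])" for u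
    have R: "wl n l X t' wX = wl n l Y t' wY \<and> image_mset hX (mset_set {1..n}) = image_mset hY (mset_set {1..n})"
      using wlt lw unfolding t hX_def hY_def by simp
    have "(\<Sum>u\<in>{1..n}. sem n X (\<nu>X'(y := u)) \<chi>) = (\<Sum>u\<in>{1..n}. sem n Y (\<nu>Y'(y := u)) \<chi>)"
    proof (rule sum_det[OF _ _ conjunct2[OF R]])
      fix a b assume ab: "a \<in> {1..n}" "b \<in> {1..n}" "hX a = hY b"
      have at: "atp l X (wX @ [a]) = atp l Y (wY @ [b])" using ab(3) unfolding hX_def hY_def by simp
      have "map (\<lambda>i. wl n l X t' (wX[i := a])) [0..<k] = map (\<lambda>i. wl n l Y t' (wY[i := b])) [0..<k]"
        using ab(3) unfolding hX_def hY_def by simp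
      hence wli: "\<forall>i<k. wl n l X t' (wX[i := a]) = wl n l Y t' (wY[i := b])"
        by (metis (mono_tags, lifting) map_eq_conv atLeastLessThan_iff set_upt zero_le)
      have ag2: "agr (Suc k) (\<pi>'(y := k)) (wX @ [a]) (wY @ [b]) (\<nu>X'(y := a)) (\<nu>Y'(y := b)) \<chi>"
        unfolding agr_def
      proof
        fix x assume x: "x \<in> free_vars \<chi>"
        show "(\<pi>'(y := k)) x < Suc k \<and> (\<nu>X'(y := a)) x = (wX @ [a]) ! (\<pi>'(y := k)) x
              \<and> (\<nu>Y'(y := b)) x = (wY @ [b]) ! (\<pi>'(y := k)) x"
        proof (cases "x = y")
          case True
          hence "(\<pi>'(y:=k)) x = k" "(\<nu>X'(y:=a)) x = a" "(\<nu>Y'(y:=b)) x = b" by auto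
          thus ?thesis using nth_append_length[of wX a] nth_append_length[of wY b] lw by simp
        next
          case False
          hence "x \<in> free_vars (Sum y \<chi>)" using x by simp
          hence h: "\<pi>' x < k" "\<nu>X' x = wX ! \<pi>' x" "\<nu>Y' x = wY ! \<pi>' x"
            using ag' unfolding agr_def by auto
          thus ?thesis using False lw by (simp add: nth_append)
        qed
      qed
      show "sem n X (\<nu>X'(y := a)) \<chi> = sem n Y (\<nu>Y'(y := b)) \<chi>"
        by (rule PA_D[OF PA G w ab(1,2) at conjunct1[OF R] wli _ _ _ ag2]) (use s t in auto)
    qed auto
    thus "sem n X \<nu>X' (Sum y \<chi>) = sem n Y \<nu>Y' (Sum y \<chi>)" by simp
  qed (use \<phi> ag in auto)
qed

lemma PAB: "PB n l k \<Omega> t \<and> PA n l k \<Omega> t"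
proof (induction t)
  case 0
  have "PB n l k \<Omega> 0" by (rule B_of_A) auto
  thus ?case using A_of_B by blast
next
  case (Suc t)
  have "PB n l k \<Omega> (Suc t)" by (rule B_of_A) (use Suc in auto)
  thus ?case using A_of_B by blast
qed

lemma closed_eq:
  assumes G: "X \<in> graphs n l" "Y \<in> graphs n l" and k: "k \<ge> 1" and n: "n \<ge> 1"
    and gw: "gwl n l k t X = gwl n l k t Y"
  shows "free_vars \<phi> = {} \<Longrightarrow> sd \<phi> \<le> Suc t \<Longrightarrow> wf_tl l \<Omega> \<phi> \<Longrightarrow> all_vars \<phi> \<subseteq> {1..k+1}
     \<Longrightarrow> sem n X \<nu>X \<phi> = sem n Y \<nu>Y \<phi>"
proof (induction \<phi> arbitrary: \<nu>X \<nu>Y)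
  case (Mul a b)
  have "sem n X \<nu>X a = sem n Y \<nu>Y a" "sem n X \<nu>X b = sem n Y \<nu>Y b"
    using Mul.prems by (auto intro!: Mul.IH)
  thus ?case by simp
next
  case (Plus a b)
  have "sem n X \<nu>X a = sem n Y \<nu>Y a" "sem n X \<nu>X b = sem n Y \<nu>Y b"
    using Plus.prems by (auto intro!: Plus.IH)
  thus ?case by simp
next
  case (Scal c a)
  have "sem n X \<nu>X a = sem n Y \<nu>Y a"
    using Scal.prems by (auto intro!: Scal.IH)
  thus ?case by simp
next
  case (App f as)
  have "map (sem n X \<nu>X) as = map (sem n Y \<nu>Y) as"
  proof (rule map_cong)
    fix a assume a: "a \<in> set as"
    show "sem n X \<nu>X a = sem n Y \<nu>Y a"
    proof (rule App.IH[OF a])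
      show "free_vars a = {}" using App.prems(1) a by auto
      show "sd a \<le> Suc t" using App.prems(2) a by (simp add: fold_max_le)
      show "wf_tl l \<Omega> a" using App.prems(3) a by simp
      show "all_vars a \<subseteq> {1..k+1}" using App.prems(4) a by auto
    qed
  qed simp
  thus ?case by (simp only: sem.simps)
next
  case (Sum x \<psi>)
  have fr: "free_vars \<psi> \<subseteq> {x}" using Sum.prems(1) by auto
  have \<psi>: "sd \<psi> \<le> t" "wf_tl l \<Omega> \<psi>" "all_vars \<psi> \<subseteq> {1..k+1}" using Sum.prems by auto
  obtain m where m: "k = Suc m" using k by (cases k) auto
  define fX where "fX u = sem n X (\<nu>X(x := u)) \<psi>" for u
  define fY where "fY u = sem n Y (\<nu>Y(x := u)) \<psi>" for u
  have PB: "PB n l k \<Omega> t" using PAB by blast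
  have "(\<Sum>w\<in>tuples n k. fX (w!0)) = (\<Sum>w\<in>tuples n k. fY (w!0))"
  proof (rule sum_det[OF finite_tuples finite_tuples])
    show "image_mset (wl n l X t) (mset_set (tuples n k)) = image_mset (wl n l Y t) (mset_set (tuples n k))"
      using gw unfolding gwl_def .
  next
    fix a b assume ab: "a \<in> tuples n k" "b \<in> tuples n k" "wl n l X t a = wl n l Y t b"
    have "agr k (\<lambda>_. 0) a b (\<nu>X(x := a!0)) (\<nu>Y(x := b!0)) \<psi>"
      unfolding agr_def using fr k by auto
    thus "fX (a!0) = fY (b!0)" unfolding fX_def fY_def by (rule PB_D[OF PB G ab \<psi>])
  qed
  hence "real (n ^ m) * (\<Sum>u\<in>{1..n}. fX u) = real (n ^ m) * (\<Sum>u\<in>{1..n}. fY u)"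
    unfolding m sum_tuples_hd .
  moreover have "real (n ^ m) \<noteq> 0" using n by simp
  ultimately have "(\<Sum>u\<in>{1..n}. fX u) = (\<Sum>u\<in>{1..n}. fY u)" using mult_left_cancel by metis
  thus ?case unfolding fX_def fY_def by simp
qed auto



definition one :: tlexpr where "one = EqInd 1 1"
definition zero :: tlexpr where "zero = Scal 0 one"

fun prodE :: "tlexpr list \<Rightarrow> tlexpr" where
  "prodE [] = one"
| "prodE (x # xs) = Mul x (prodE xs)"

definition good :: "nat \<Rightarrow> (nat \<times> (real list \<Rightarrow> real)) set \<Rightarrow> nat \<Rightarrow> nat set \<Rightarrow> nat \<Rightarrow> tlexpr \<Rightarrow> bool" where
  "good l \<Omega> K FV t \<phi> \<longleftrightarrow> wf_tl l \<Omega> \<phi> \<and> all_vars \<phi> \<subseteq> {1..K} \<and> free_vars \<phi> \<subseteq> FV \<and> sd \<phi> \<le> t"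

lemma sem_one[simp]: "sem n Z \<nu> one = 1" by (simp add: one_def)
lemma sem_zero[simp]: "sem n Z \<nu> zero = 0" by (simp add: zero_def)

lemma good_one: "1 \<le> K \<Longrightarrow> 1 \<in> FV \<Longrightarrow> good l \<Omega> K FV t one"
  by (simp add: good_def one_def)
lemma good_zero: "1 \<le> K \<Longrightarrow> 1 \<in> FV \<Longrightarrow> good l \<Omega> K FV t zero"
  by (simp add: good_def zero_def one_def)
lemma good_Mul: "good l \<Omega> K FV t a \<Longrightarrow> good l \<Omega> K FV t b \<Longrightarrow> good l \<Omega> K FV t (Mul a b)"
  by (simp add: good_def)
lemma good_Plus: "good l \<Omega> K FV t a \<Longrightarrow> good l \<Omega> K FV t b \<Longrightarrow> good l \<Omega> K FV t (Plus a b)"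
  by (simp add: good_def)
lemma good_Scal: "good l \<Omega> K FV t a \<Longrightarrow> good l \<Omega> K FV t (Scal c a)"
  by (simp add: good_def)
lemma good_mono: "good l \<Omega> K FV t a \<Longrightarrow> FV \<subseteq> FV' \<Longrightarrow> t \<le> t' \<Longrightarrow> good l \<Omega> K FV' t' a"
  by (auto simp: good_def)

lemma good_prodE: "1 \<le> K \<Longrightarrow> 1 \<in> FV \<Longrightarrow> (\<forall>x\<in>set xs. good l \<Omega> K FV t x) \<Longrightarrow> good l \<Omega> K FV t (prodE xs)"
  by (induction xs) (auto intro: good_one good_Mul)

lemma sem_prodE: "sem n Z \<nu> (prodE xs) = prod_list (map (sem n Z \<nu>) xs)"
  by (induction xs) auto

lemma prod_list_ones: "(\<forall>x\<in>set xs. f x = (1::real)) \<Longrightarrow> prod_list (map f xs) = 1"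
  by (induction xs) auto

lemma prod_list_ind: "prod_list (map (\<lambda>x. if P x then 1 else 0 :: real) xs) = (if \<forall>x\<in>set xs. P x then 1 else 0)"
  by (induction xs) auto

definition lag :: "tlexpr \<Rightarrow> nat \<Rightarrow> nat \<Rightarrow> tlexpr" where
  "lag \<psi> r n = prodE (map (\<lambda>j. Scal (1 / (real r - real j)) (Plus \<psi> (Scal (- real j) one)))
                  (filter (\<lambda>j. j \<noteq> r) [0..<Suc n]))"

lemma sem_lag:
  assumes "sem m Z \<nu> \<psi> = real N" "N \<le> n"
  shows "sem m Z \<nu> (lag \<psi> r n) = (if N = r then 1 else 0)"
proof -
  have S: "sem m Z \<nu> (lag \<psi> r n) = prod_list (map (\<lambda>j. (1 / (real r - real j)) * (real N + - real j))
                  (filter (\<lambda>j. j \<noteq> r) [0..<Suc n]))"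
    unfolding lag_def sem_prodE using assms(1) by (simp add: comp_def)
  show ?thesis
  proof (cases "N = r")
    case True
    have "prod_list (map (\<lambda>j. (1 / (real r - real j)) * (real N + - real j))
                  (filter (\<lambda>j. j \<noteq> r) [0..<Suc n])) = 1"
      by (rule prod_list_ones) (use True in auto)
    thus ?thesis using S True by simp
  next
    case False
    have "N \<in> set (filter (\<lambda>j. j \<noteq> r) [0..<Suc n])" using False assms(2) by auto
    hence "0 \<in> set (map (\<lambda>j. (1 / (real r - real j)) * (real N + - real j))
                  (filter (\<lambda>j. j \<noteq> r) [0..<Suc n]))"
      by (metis (no_types, lifting) add.right_inverse image_eqI list.set_map mult_zero_right)
    hence "prod_list (map (\<lambda>j. (1 / (real r - real j)) * (real N + - real j))
                  (filter (\<lambda>j. j \<noteq> r) [0..<Suc n])) = 0"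
      by (simp add: prod_list_zero_iff)
    thus ?thesis using S False by simp
  qed
qed

lemma good_lag: "1 \<le> K \<Longrightarrow> 1 \<in> FV \<Longrightarrow> good l \<Omega> K FV t \<psi> \<Longrightarrow> good l \<Omega> K FV t (lag \<psi> r n)"
  unfolding lag_def by (rule good_prodE) (auto intro!: good_Scal good_Plus good_one)

definition tup :: "nat \<Rightarrow> (nat \<Rightarrow> nat) \<Rightarrow> nat list" where
  "tup m \<nu> = map \<nu> [1..<Suc m]"

lemma tup_length[simp]: "length (tup m \<nu>) = m" by (simp add: tup_def)
lemma tup_nth[simp]: "i < m \<Longrightarrow> tup m \<nu> ! i = \<nu> (Suc i)" by (simp add: tup_def del: upt_Suc)
lemma tup_tuples: "range \<nu> \<subseteq> {1..n} \<Longrightarrow> tup m \<nu> \<in> tuples n m"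
  unfolding tup_def tuples_def by auto



lemma feat:
  assumes "X \<in> graphs n l" "Y \<in> graphs n l" "atp l X (tup m \<nu>) = atp l Y (tup m \<mu>)" "i < m" "j < m"
  shows "(\<nu> (Suc i) = \<nu> (Suc j)) = (\<mu> (Suc i) = \<mu> (Suc j))"
    "edge X (\<nu> (Suc i)) (\<nu> (Suc j)) = edge Y (\<mu> (Suc i)) (\<mu> (Suc j))"
    "s \<in> {1..l} \<Longrightarrow> col X (\<nu> (Suc i)) s = col Y (\<mu> (Suc i)) s"
  using atp_nth[OF assms(1-3), of i j] atp_col[OF assms(3), of i s] assms(4,5) by auto

lemma sep_exists:
  assumes G: "G \<in> graphs n l" "H \<in> graphs n l" and m: "1 \<le> m" "m \<le> K"
  shows "\<exists>e. good l \<Omega> K {1..m} 0 e \<and> (\<forall>Z\<in>{G,H}. \<forall>\<nu>.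
     (atp l Z (tup m \<nu>) = a \<longrightarrow> sem n Z \<nu> e = 1) \<and>
     (atp l Z (tup m \<nu>) = a' \<and> a \<noteq> a' \<longrightarrow> sem n Z \<nu> e = 0))"
proof -
  have one: "good l \<Omega> K {1..m} 0 one" by (rule good_one) (use m in auto)
  have zero: "good l \<Omega> K {1..m} 0 zero" by (rule good_zero) (use m in auto)
  have ZG: "Z \<in> graphs n l" if "Z \<in> {G,H}" for Z using that G by auto
  show ?thesis
  proof (cases "a = a' \<or> \<not> (\<exists>Z2\<in>{G,H}. \<exists>\<nu>2. atp l Z2 (tup m \<nu>2) = a')")
    case True
    thus ?thesis using one by (intro exI[of _ one]) auto
  next
    case F1: False
    show ?thesis
    proof (cases "\<exists>Z1\<in>{G,H}. \<exists>\<nu>1. atp l Z1 (tup m \<nu>1) = a")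
      case False
      thus ?thesis using zero by (intro exI[of _ zero]) auto
    next
      case True
      then obtain Z1 \<nu>1 where Z1: "Z1 \<in> {G,H}" "atp l Z1 (tup m \<nu>1) = a" by blast
      obtain Z2 \<nu>2 where Z2: "Z2 \<in> {G,H}" "atp l Z2 (tup m \<nu>2) = a'" using F1 by blast
      have ne: "a \<noteq> a'" using F1 by blast
      hence "atp l Z1 (tup m \<nu>1) \<noteq> atp l Z2 (tup m \<nu>2)" using Z1 Z2 by simp
      hence "\<not> ((\<forall>i<m. \<forall>j<m. ((tup m \<nu>1)!i = (tup m \<nu>1)!j) = ((tup m \<nu>2)!i = (tup m \<nu>2)!j) \<and>
                 edge Z1 ((tup m \<nu>1)!i) ((tup m \<nu>1)!j) = edge Z2 ((tup m \<nu>2)!i) ((tup m \<nu>2)!j)) \<and>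
              (\<forall>i<m. \<forall>s\<in>{1..l}. col Z1 ((tup m \<nu>1)!i) s = col Z2 ((tup m \<nu>2)!i) s))"
        using atp_eqI[of "tup m \<nu>1" "tup m \<nu>2" Z1 Z2 l] unfolding tup_length by blast
      hence "\<not> ((\<forall>i<m. \<forall>j<m. (\<nu>1 (Suc i) = \<nu>1 (Suc j)) = (\<nu>2 (Suc i) = \<nu>2 (Suc j)) \<and>
                 edge Z1 (\<nu>1 (Suc i)) (\<nu>1 (Suc j)) = edge Z2 (\<nu>2 (Suc i)) (\<nu>2 (Suc j))) \<and>
              (\<forall>i<m. \<forall>s\<in>{1..l}. col Z1 (\<nu>1 (Suc i)) s = col Z2 (\<nu>2 (Suc i)) s))"
        by (simp only: tup_nth cong: conj_cong imp_cong) (simp only: not_False_eq_True)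
      hence cases: "(\<exists>i<m. \<exists>j<m. (\<nu>1 (Suc i) = \<nu>1 (Suc j)) \<noteq> (\<nu>2 (Suc i) = \<nu>2 (Suc j))) \<or>
          (\<exists>i<m. \<exists>j<m. edge Z1 (\<nu>1 (Suc i)) (\<nu>1 (Suc j)) \<noteq> edge Z2 (\<nu>2 (Suc i)) (\<nu>2 (Suc j))) \<or>
          (\<exists>i<m. \<exists>s\<in>{1..l}. col Z1 (\<nu>1 (Suc i)) s \<noteq> col Z2 (\<nu>2 (Suc i)) s)" by blast
      have A: "(\<nu> (Suc i) = \<nu> (Suc j)) = (\<nu>1 (Suc i) = \<nu>1 (Suc j))
             \<and> edge Z (\<nu> (Suc i)) (\<nu> (Suc j)) = edge Z1 (\<nu>1 (Suc i)) (\<nu>1 (Suc j))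
             \<and> (\<forall>s\<in>{1..l}. col Z (\<nu> (Suc i)) s = col Z1 (\<nu>1 (Suc i)) s)"
        if "Z \<in> {G,H}" "atp l Z (tup m \<nu>) = a" "i < m" "j < m" for Z \<nu> i j
        using feat[OF ZG[OF that(1)] ZG[OF Z1(1)], of m \<nu> \<nu>1 i j] that Z1 by auto
      have B: "(\<nu> (Suc i) = \<nu> (Suc j)) = (\<nu>2 (Suc i) = \<nu>2 (Suc j))
             \<and> edge Z (\<nu> (Suc i)) (\<nu> (Suc j)) = edge Z2 (\<nu>2 (Suc i)) (\<nu>2 (Suc j))
             \<and> (\<forall>s\<in>{1..l}. col Z (\<nu> (Suc i)) s = col Z2 (\<nu>2 (Suc i)) s)"
        if "Z \<in> {G,H}" "atp l Z (tup m \<nu>) = a'" "i < m" "j < m" for Z \<nu> i j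
        using feat[OF ZG[OF that(1)] ZG[OF Z2(1)], of m \<nu> \<nu>2 i j] that Z2 by auto
      from cases consider (c1) i j where "i < m" "j < m" "(\<nu>1 (Suc i) = \<nu>1 (Suc j)) \<noteq> (\<nu>2 (Suc i) = \<nu>2 (Suc j))"
        | (c2) i j where "i < m" "j < m" "edge Z1 (\<nu>1 (Suc i)) (\<nu>1 (Suc j)) \<noteq> edge Z2 (\<nu>2 (Suc i)) (\<nu>2 (Suc j))"
        | (c3) i s where "i < m" "s \<in> {1..l}" "col Z1 (\<nu>1 (Suc i)) s \<noteq> col Z2 (\<nu>2 (Suc i)) s"
        by blast
      then show ?thesis
      proof cases
        case (c1 i j)
        note ij = c1
        define p where "p = (\<nu>1 (Suc i) = \<nu>1 (Suc j))"
        define e where "e = (if p then EqInd (Suc i) (Suc j) else NeqInd (Suc i) (Suc j))"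
        have "good l \<Omega> K {1..m} 0 e" unfolding e_def good_def using ij m by auto
        moreover have "\<forall>Z\<in>{G,H}. \<forall>\<nu>. (atp l Z (tup m \<nu>) = a \<longrightarrow> sem n Z \<nu> e = 1) \<and>
             (atp l Z (tup m \<nu>) = a' \<and> a \<noteq> a' \<longrightarrow> sem n Z \<nu> e = 0)"
        proof (intro ballI allI conjI impI)
          fix Z \<nu> assume Z: "Z \<in> {G,H}" "atp l Z (tup m \<nu>) = a"
          have "(\<nu> (Suc i) = \<nu> (Suc j)) = p" using conjunct1[OF A[OF Z ij(1) ij(2)]] unfolding p_def .
          thus "sem n Z \<nu> e = 1" unfolding e_def by (cases p) auto
        next
          fix Z \<nu> assume Z: "Z \<in> {G,H}" "atp l Z (tup m \<nu>) = a' \<and> a \<noteq> a'"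
          have "(\<nu> (Suc i) = \<nu> (Suc j)) = (\<not> p)"
            using conjunct1[OF B[OF Z(1) conjunct1[OF Z(2)] ij(1) ij(2)]] ij(3) unfolding p_def by blast
          thus "sem n Z \<nu> e = 0" unfolding e_def by (cases p) auto
        qed
        ultimately show ?thesis by blast
      next
        case (c2 i j)
        note ij = c2
        define p where "p = edge Z1 (\<nu>1 (Suc i)) (\<nu>1 (Suc j))"
        define e where "e = (if p then EdgeAt (Suc i) (Suc j) else Plus one (Scal (-1) (EdgeAt (Suc i) (Suc j))))"
        have "good l \<Omega> K {1..m} 0 e" unfolding e_def good_def one_def using ij m by auto
        moreover have "\<forall>Z\<in>{G,H}. \<forall>\<nu>. (atp l Z (tup m \<nu>) = a \<longrightarrow> sem n Z \<nu> e = 1) \<and>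
             (atp l Z (tup m \<nu>) = a' \<and> a \<noteq> a' \<longrightarrow> sem n Z \<nu> e = 0)"
        proof (intro ballI allI conjI impI)
          fix Z \<nu> assume Z: "Z \<in> {G,H}" "atp l Z (tup m \<nu>) = a"
          have "edge Z (\<nu> (Suc i)) (\<nu> (Suc j)) = p" using conjunct1[OF conjunct2[OF A[OF Z ij(1) ij(2)]]] unfolding p_def .
          thus "sem n Z \<nu> e = 1" unfolding e_def by (cases p) (auto simp: one_def)
        next
          fix Z \<nu> assume Z: "Z \<in> {G,H}" "atp l Z (tup m \<nu>) = a' \<and> a \<noteq> a'"
          have "edge Z (\<nu> (Suc i)) (\<nu> (Suc j)) = (\<not> p)"
            using conjunct1[OF conjunct2[OF B[OF Z(1) conjunct1[OF Z(2)] ij(1) ij(2)]]] ij(3) unfolding p_def by blast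
          thus "sem n Z \<nu> e = 0" unfolding e_def by (cases p) (auto simp: one_def)
        qed
        ultimately show ?thesis by blast
      next
        case (c3 i s)
        note iS = c3
        define r1 where "r1 = col Z1 (\<nu>1 (Suc i)) s"
        define r2 where "r2 = col Z2 (\<nu>2 (Suc i)) s"
        define e where "e = Scal (1 / (r1 - r2)) (Plus (Lab s (Suc i)) (Scal (- r2) one))"
        have "good l \<Omega> K {1..m} 0 e" unfolding e_def good_def one_def using iS m by auto
        moreover have "\<forall>Z\<in>{G,H}. \<forall>\<nu>. (atp l Z (tup m \<nu>) = a \<longrightarrow> sem n Z \<nu> e = 1) \<and>
             (atp l Z (tup m \<nu>) = a' \<and> a \<noteq> a' \<longrightarrow> sem n Z \<nu> e = 0)"
        proof (intro ballI allI conjI impI)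
          fix Z \<nu> assume Z: "Z \<in> {G,H}" "atp l Z (tup m \<nu>) = a"
          have "col Z (\<nu> (Suc i)) s = r1" using conjunct2[OF conjunct2[OF A[OF Z iS(1) iS(1)]]] iS(2) unfolding r1_def by blast
          thus "sem n Z \<nu> e = 1" unfolding e_def using iS(3) unfolding r1_def r2_def by simp
        next
          fix Z \<nu> assume Z: "Z \<in> {G,H}" "atp l Z (tup m \<nu>) = a' \<and> a \<noteq> a'"
          have "col Z (\<nu> (Suc i)) s = r2" using conjunct2[OF conjunct2[OF B[OF Z(1) conjunct1[OF Z(2)] iS(1) iS(1)]]] iS(2) unfolding r2_def by blast
          thus "sem n Z \<nu> e = 0" unfolding e_def by simp
        qed
        ultimately show ?thesis by blast
      qed
    qed
  qed
qed

lemma atpind_exists: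
  assumes G: "G \<in> graphs n l" "H \<in> graphs n l" and m: "1 \<le> m" "m \<le> K"
  shows "\<exists>e. good l \<Omega> K {1..m} 0 e \<and> (\<forall>Z\<in>{G,H}. \<forall>\<nu>. range \<nu> \<subseteq> {1..n} \<longrightarrow>
     sem n Z \<nu> e = (if atp l Z (tup m \<nu>) = a then 1 else 0))"
proof -
  define R where "R = (\<lambda>(Z, w). atp l Z w) ` ({G,H} \<times> tuples n m)"
  have finR: "finite R" unfolding R_def using finite_tuples by (intro finite_imageI finite_cartesian_product) auto
  obtain as where as: "set as = R - {a}" "distinct as"
    using finite_distinct_list[of "R - {a}"] finR by auto
  define P where "P a' e \<longleftrightarrow> good l \<Omega> K {1..m} 0 e \<and> (\<forall>Z\<in>{G,H}. \<forall>\<nu>.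
     (atp l Z (tup m \<nu>) = a \<longrightarrow> sem n Z \<nu> e = 1) \<and>
     (atp l Z (tup m \<nu>) = a' \<and> a \<noteq> a' \<longrightarrow> sem n Z \<nu> e = 0))" for a' e
  have ex: "\<forall>a'. \<exists>e. P a' e" unfolding P_def using sep_exists[OF G m] by (intro allI)
  obtain S where S: "\<forall>a'. P a' (S a')" using choice[OF ex] by (elim exE)
  have SG: "good l \<Omega> K {1..m} 0 (S a')" for a' using spec[OF S, of a'] unfolding P_def by (elim conjE)
  have S1: "sem n Z \<nu> (S a') = 1" if "Z \<in> {G,H}" "atp l Z (tup m \<nu>) = a" for a' Z \<nu>
    using spec[OF S, of a'] that unfolding P_def by blast
  have S0: "sem n Z \<nu> (S a') = 0" if "Z \<in> {G,H}" "atp l Z (tup m \<nu>) = a'" "a \<noteq> a'" for a' Z \<nu>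
    using spec[OF S, of a'] that unfolding P_def by blast
  define e where "e = prodE (map S as)"
  have "good l \<Omega> K {1..m} 0 e" unfolding e_def
    by (rule good_prodE) (use m SG in auto)
  moreover have "sem n Z \<nu> e = (if atp l Z (tup m \<nu>) = a then 1 else 0)"
    if Z: "Z \<in> {G,H}" "range \<nu> \<subseteq> {1..n}" for Z \<nu>
  proof (cases "atp l Z (tup m \<nu>) = a")
    case True
    have "prod_list (map (sem n Z \<nu>) (map S as)) = 1"
      by (rule prod_list_ones) (use S1[OF Z(1) True] in auto)
    thus ?thesis using True unfolding e_def sem_prodE by simp
  next
    case False
    have "atp l Z (tup m \<nu>) \<in> R" unfolding R_def using Z tup_tuples[OF Z(2), of m] by force
    hence inas: "atp l Z (tup m \<nu>) \<in> set as" using as False by simp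
    have "sem n Z \<nu> (S (atp l Z (tup m \<nu>))) = 0" using S0[OF Z(1) refl] False by metis
    hence "0 \<in> set (map (sem n Z \<nu>) (map S as))" using inas by force
    hence "prod_list (map (sem n Z \<nu>) (map S as)) = 0" by (simp add: prod_list_zero_iff)
    thus ?thesis using False unfolding e_def sem_prodE by simp
  qed
  ultimately show ?thesis by blast
qed



definition swp :: "nat \<Rightarrow> nat \<Rightarrow> nat \<Rightarrow> nat" where
  "swp a b x = (if x = a then b else if x = b then a else x)"

lemma inj_swp: "inj (swp a b)"
  unfolding swp_def inj_def by auto

lemma swp_range: "a \<in> {1..K} \<Longrightarrow> b \<in> {1..K} \<Longrightarrow> swp a b ` {1..K} \<subseteq> {1..K}"
  unfolding swp_def by auto

lemma tup_swp:
  assumes "i < k"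
  shows "tup k (\<nu> \<circ> swp (Suc i) (Suc k)) = (tup k \<nu>)[i := \<nu> (Suc k)]"
proof (rule nth_equalityI)
  show "length (tup k (\<nu> \<circ> swp (Suc i) (Suc k))) = length ((tup k \<nu>)[i := \<nu> (Suc k)])" by simp
next
  fix j assume "j < length (tup k (\<nu> \<circ> swp (Suc i) (Suc k)))"
  hence j: "j < k" by simp
  show "tup k (\<nu> \<circ> swp (Suc i) (Suc k)) ! j = (tup k \<nu>)[i := \<nu> (Suc k)] ! j"
    using j assms by (simp add: swp_def nth_list_update)
qed

lemma tup_Suc: "tup (Suc k) \<nu> = tup k \<nu> @ [\<nu> (Suc k)]"
  unfolding tup_def by simp

lemma tup_upd: "tup k (\<nu>(Suc k := u)) = tup k \<nu>"
  unfolding tup_def by (intro map_cong) auto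

definition Qspec :: "nat \<Rightarrow> nat \<Rightarrow> (nat \<times> (real list \<Rightarrow> real)) set \<Rightarrow> nat \<Rightarrow> graph \<Rightarrow> graph \<Rightarrow> nat \<Rightarrow> wlcol \<Rightarrow> tlexpr \<Rightarrow> bool" where
  "Qspec n l \<Omega> k G H t c \<phi> \<longleftrightarrow> good l \<Omega> (Suc k) {1..k} t \<phi> \<and>
     (\<forall>Z\<in>{G,H}. \<forall>\<nu>. range \<nu> \<subseteq> {1..n} \<longrightarrow> sem n Z \<nu> \<phi> = (if wl n l Z t (tup k \<nu>) = c then 1 else 0))"

lemma good_ren:
  assumes "good l \<Omega> (Suc k) {1..k} t \<psi>" "i < k"
  shows "good l \<Omega> (Suc k) {1..Suc k} t (ren (swp (Suc i) (Suc k)) \<psi>)"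
proof -
  have r: "swp (Suc i) (Suc k) ` {1..Suc k} \<subseteq> {1..Suc k}" by (rule swp_range) (use assms(2) in auto)
  have "all_vars \<psi> \<subseteq> {1..Suc k}" "free_vars \<psi> \<subseteq> {1..Suc k}" using assms(1) unfolding good_def by auto
  hence "swp (Suc i) (Suc k) ` all_vars \<psi> \<subseteq> {1..Suc k}" "swp (Suc i) (Suc k) ` free_vars \<psi> \<subseteq> {1..Suc k}"
    using r by blast+
  thus ?thesis using assms(1) unfolding good_def
    by (simp add: all_vars_ren free_ren[OF inj_swp] sd_ren wf_ren)
qed

lemma ind_exists:
  assumes G: "G \<in> graphs n l" "H \<in> graphs n l" and k: "1 \<le> k"
  shows "\<exists>\<phi>. Qspec n l \<Omega> k G H t c \<phi>"
proof (induction t arbitrary: c)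
  case 0
  show ?case
  proof (cases c)
    case (Base a)
    obtain e where e: "good l \<Omega> (Suc k) {1..k} 0 e" "\<forall>Z\<in>{G,H}. \<forall>\<nu>. range \<nu> \<subseteq> {1..n} \<longrightarrow>
       sem n Z \<nu> e = (if atp l Z (tup k \<nu>) = a then 1 else 0)"
      using atpind_exists[OF G k, of "Suc k" \<Omega> a] by auto
    have "Qspec n l \<Omega> k G H 0 c e" unfolding Qspec_def using e Base by simp
    thus ?thesis by blast
  next
    case (Refine c0 M)
    have "Qspec n l \<Omega> k G H 0 c zero" unfolding Qspec_def using Refine k by (simp add: good_zero)
    thus ?thesis by blast
  qed
next
  case (Suc t)
  have exF: "\<forall>c. \<exists>\<phi>. Qspec n l \<Omega> k G H t c \<phi>" using Suc.IH by (intro allI)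
  obtain F where F: "\<forall>c. Qspec n l \<Omega> k G H t c (F c)" using choice[OF exF] by (elim exE)
  have FG: "good l \<Omega> (Suc k) {1..k} t (F c)" for c using spec[OF F, of c] unfolding Qspec_def by (elim conjE)
  have Fsem: "sem n Z \<nu> (F c) = (if wl n l Z t (tup k \<nu>) = c then 1 else 0)"
    if "Z \<in> {G,H}" "range \<nu> \<subseteq> {1..n}" for Z \<nu> c
    using spec[OF F, of c] that unfolding Qspec_def by blast
  show ?case
  proof (cases c)
    case (Base a)
    have "Qspec n l \<Omega> k G H (Suc t) c zero" unfolding Qspec_def using Base k by (simp add: good_zero)
    thus ?thesis by blast
  next
    case (Refine c0 M)
    define h where "h Z v u = (atp l Z (v @ [u]), map (\<lambda>i. wl n l Z t (v[i := u])) [0..<k])" for Z v u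
    define R where "R = (\<lambda>(Z, v, u). h Z v u) ` ({G,H} \<times> tuples n k \<times> {1..n})"
    define E where "E = R \<union> set_mset M"
    have finE: "finite E" unfolding E_def R_def using finite_tuples
      by (intro finite_UnI finite_imageI finite_cartesian_product) auto
    obtain es where es: "set es = E" "distinct es" using finite_distinct_list[OF finE] by auto
    define PA where "PA a e \<longleftrightarrow> good l \<Omega> (Suc k) {1..Suc k} 0 e \<and> (\<forall>Z\<in>{G,H}. \<forall>\<nu>. range \<nu> \<subseteq> {1..n} \<longrightarrow>
       sem n Z \<nu> e = (if atp l Z (tup (Suc k) \<nu>) = a then 1 else 0))" for a e
    have exA: "\<forall>a. \<exists>e. PA a e" unfolding PA_def using atpind_exists[OF G, of "Suc k" "Suc k" \<Omega>] by (intro allI) auto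
    obtain AI where AI: "\<forall>a. PA a (AI a)" using choice[OF exA] by (elim exE)
    have AIG: "good l \<Omega> (Suc k) {1..Suc k} 0 (AI a)" for a using spec[OF AI, of a] unfolding PA_def by (elim conjE)
    have AIsem: "sem n Z \<nu> (AI a) = (if atp l Z (tup (Suc k) \<nu>) = a then 1 else 0)"
      if "Z \<in> {G,H}" "range \<nu> \<subseteq> {1..n}" for Z \<nu> a
      using spec[OF AI, of a] that unfolding PA_def by blast
    define sw where "sw i = swp (Suc i) (Suc k)" for i
    define Term where "Term e = (if length (snd e) = k
        then Mul (AI (fst e)) (prodE (map (\<lambda>i. ren (sw i) (F (snd e ! i))) [0..<k])) else zero)" for e
    define N where "N e = Sum (Suc k) (Term e)" for e
    define Ind where "Ind e = lag (N e) (count M e) n" for e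
    define \<phi> where "\<phi> = Mul (F c0) (prodE (map Ind es))"
    have TermG: "good l \<Omega> (Suc k) {1..Suc k} t (Term e)" for e
    proof (cases "length (snd e) = k")
      case True
      have "good l \<Omega> (Suc k) {1..Suc k} t (prodE (map (\<lambda>i. ren (sw i) (F (snd e ! i))) [0..<k]))"
        by (rule good_prodE) (use good_ren[OF FG] in \<open>auto simp: sw_def\<close>)
      moreover have "good l \<Omega> (Suc k) {1..Suc k} t (AI (fst e))" by (rule good_mono[OF AIG]) auto
      ultimately show ?thesis using True unfolding Term_def by (simp add: good_Mul)
    next
      case False
      thus ?thesis unfolding Term_def by (simp add: good_zero)
    qed
    have NG: "good l \<Omega> (Suc k) {1..k} (Suc t) (N e)" for e
      using TermG[of e] unfolding N_def good_def by auto
    have IndG: "good l \<Omega> (Suc k) {1..k} (Suc t) (Ind e)" for e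
      unfolding Ind_def by (rule good_lag) (use k NG in auto)
    have \<phi>G: "good l \<Omega> (Suc k) {1..k} (Suc t) \<phi>"
      unfolding \<phi>_def
    proof (rule good_Mul)
      show "good l \<Omega> (Suc k) {1..k} (Suc t) (F c0)" by (rule good_mono[OF FG]) auto
      show "good l \<Omega> (Suc k) {1..k} (Suc t) (prodE (map Ind es))"
        by (rule good_prodE) (use k IndG in auto)
    qed
    have \<phi>sem: "sem n Z \<nu> \<phi> = (if wl n l Z (Suc t) (tup k \<nu>) = c then 1 else 0)"
      if Z: "Z \<in> {G,H}" "range \<nu> \<subseteq> {1..n}" for Z \<nu>
    proof -
      define v where "v = tup k \<nu>"
      have v: "v \<in> tuples n k" unfolding v_def by (rule tup_tuples[OF Z(2)])
      have lv: "length v = k" unfolding v_def by simp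
      define A where "A = image_mset (h Z v) (mset_set {1..n})"
      have T1: "sem n Z (\<nu>(Suc k := u)) (Term e) = (if h Z v u = e then 1 else 0)"
        if u: "u \<in> {1..n}" for u e
      proof -
        define \<nu>' where "\<nu>' = \<nu>(Suc k := u)"
        have r': "range \<nu>' \<subseteq> {1..n}" unfolding \<nu>'_def using Z(2) u by auto
        have tup': "tup (Suc k) \<nu>' = v @ [u]" unfolding \<nu>'_def v_def tup_Suc tup_upd by simp
        have tupk: "tup k \<nu>' = v" unfolding \<nu>'_def v_def tup_upd ..
        show ?thesis
        proof (cases "length (snd e) = k")
          case True
          have ren: "sem n Z \<nu>' (ren (sw i) (F (snd e ! i))) = (if wl n l Z t (v[i := u]) = snd e ! i then 1 else 0)"
            if i: "i \<in> set [0..<k]" for i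
          proof -
            have ik: "i < k" using i by simp
            have "sem n Z \<nu>' (ren (sw i) (F (snd e ! i))) = sem n Z (\<nu>' \<circ> sw i) (F (snd e ! i))"
              unfolding sw_def by (rule sem_ren[OF inj_swp])
            also have "\<dots> = (if wl n l Z t (tup k (\<nu>' \<circ> sw i)) = snd e ! i then 1 else 0)"
              by (rule Fsem[OF Z(1)]) (use r' in auto)
            also have "tup k (\<nu>' \<circ> sw i) = v[i := u]"
              unfolding sw_def tup_swp[OF ik] tupk by (simp add: \<nu>'_def)
            finally show ?thesis .
          qed
          have "sem n Z \<nu>' (prodE (map (\<lambda>i. ren (sw i) (F (snd e ! i))) [0..<k]))
              = prod_list (map (\<lambda>i. if wl n l Z t (v[i := u]) = snd e ! i then 1 else 0) [0..<k])"
            unfolding sem_prodE map_map comp_def using ren by (intro arg_cong[where f=prod_list] map_cong) auto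
          also have "\<dots> = (if map (\<lambda>i. wl n l Z t (v[i := u])) [0..<k] = snd e then 1 else 0)"
            unfolding prod_list_ind using True by (auto simp: list_eq_iff_nth_eq)
          finally have P: "sem n Z \<nu>' (prodE (map (\<lambda>i. ren (sw i) (F (snd e ! i))) [0..<k]))
              = (if map (\<lambda>i. wl n l Z t (v[i := u])) [0..<k] = snd e then 1 else 0)" .
          have "sem n Z \<nu>' (Term e) = (if atp l Z (v @ [u]) = fst e then 1 else 0) *
               (if map (\<lambda>i. wl n l Z t (v[i := u])) [0..<k] = snd e then 1 else 0)"
            unfolding Term_def using True P AIsem[OF Z(1) r'] tup' by simp
          also have "\<dots> = (if h Z v u = e then 1 else 0)"
            unfolding h_def by (cases e) auto
          finally show ?thesis unfolding \<nu>'_def .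
        next
          case False
          have "h Z v u \<noteq> e" using False unfolding h_def by auto
          thus ?thesis using False unfolding Term_def by simp
        qed
      qed
      have T2: "sem n Z \<nu> (N e) = real (count A e)" for e
      proof -
        have "sem n Z \<nu> (N e) = (\<Sum>u\<in>{1..n}. sem n Z (\<nu>(Suc k := u)) (Term e))"
          unfolding N_def by simp
        also have "\<dots> = (\<Sum>u\<in>{1..n}. if h Z v u = e then 1 else 0)"
          using T1 by (intro sum.cong) auto
        also have "\<dots> = real (count A e)" unfolding A_def by (rule sum_ind_count) simp
        finally show ?thesis .
      qed
      have cnt: "count A e \<le> n" for e
        using count_le_size[of A e] unfolding A_def by simp
      have T3: "sem n Z \<nu> (Ind e) = (if count A e = count M e then 1 else 0)" for e
        unfolding Ind_def by (rule sem_lag[OF T2 cnt])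
      have T4: "sem n Z \<nu> (prodE (map Ind es)) = (if \<forall>e\<in>E. count A e = count M e then 1 else 0)"
        unfolding sem_prodE map_map comp_def T3 prod_list_ind es(1) ..
      have AR: "set_mset A \<subseteq> R"
      proof
        fix x assume "x \<in> set_mset A"
        then obtain u where u: "u \<in> {1..n}" "x = h Z v u" unfolding A_def by auto
        show "x \<in> R" unfolding R_def using Z(1) v u by force
      qed
      have T5: "(\<forall>e\<in>E. count A e = count M e) \<longleftrightarrow> A = M"
      proof
        assume H: "\<forall>e\<in>E. count A e = count M e"
        show "A = M"
        proof (rule multiset_eqI)
          fix x show "count A x = count M x"
          proof (cases "x \<in> E")
            case True thus ?thesis using H by blast
          next
            case False
            hence "x \<notin> set_mset A" "x \<notin> set_mset M" using AR unfolding E_def by auto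
            thus ?thesis by (simp add: not_in_iff)
          qed
        qed
      qed simp
      have WL: "wl n l Z (Suc t) v = Refine (wl n l Z t v) A"
        unfolding A_def h_def using lv by simp
      show ?thesis
        unfolding \<phi>_def sem.simps T4 T5 Fsem[OF Z] v_def[symmetric] WL Refine by simp
    qed
    have "Qspec n l \<Omega> k G H (Suc t) c \<phi>" unfolding Qspec_def using \<phi>G \<phi>sem by blast
    thus ?thesis by blast
  qed
qed



lemma part1:
  assumes GH: "(G, H) \<in> rho0_TL n l (TL l \<Omega> (k + 1) (t + k))" and k: "k \<ge> 1" and n: "n \<ge> 1"
  shows "gwl n l k t G = gwl n l k t H"
proof -
  have G: "G \<in> graphs n l" "H \<in> graphs n l" using GH unfolding rho0_TL_def by auto
  have agree: "\<And>\<phi> \<nu>. \<phi> \<in> TL l \<Omega> (k + 1) (t + k) \<Longrightarrow> free_vars \<phi> = {} \<Longrightarrow> range \<nu> \<subseteq> {1..n}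
      \<Longrightarrow> sem n G \<nu> \<phi> = sem n H \<nu> \<phi>"
    using GH unfolding rho0_TL_def by blast
  show ?thesis
  proof (rule multiset_eqI)
    fix c
    obtain \<phi> where \<phi>: "Qspec n l \<Omega> k G H t c \<phi>" using ind_exists[OF G k] by blast
    have \<phi>G: "good l \<Omega> (Suc k) {1..k} t \<phi>" using \<phi> unfolding Qspec_def by blast
    have \<phi>sem: "sem n Z \<nu> \<phi> = (if wl n l Z t (tup k \<nu>) = c then 1 else 0)"
      if "Z \<in> {G,H}" "range \<nu> \<subseteq> {1..n}" for Z \<nu> using \<phi> that unfolding Qspec_def by blast
    define top where "top = sumsE [1..<Suc k] \<phi>"
    have inTL: "top \<in> TL l \<Omega> (k + 1) (t + k)"
      using \<phi>G unfolding TL_def top_def good_def by (auto simp: wf_sums all_vars_sums sd_sums)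
    have cl: "free_vars top = {}"
      using \<phi>G unfolding top_def good_def by (auto simp: free_sums)
    define \<nu>0 where "\<nu>0 = (\<lambda>_::nat. 1::nat)"
    have r0: "range \<nu>0 \<subseteq> {1..n}" unfolding \<nu>0_def using n by auto
    have val: "sem n Z \<nu>0 top = real (count (gwl n l k t Z) c)" if Z: "Z \<in> {G,H}" for Z
    proof -
      have "sem n Z \<nu>0 top = (\<Sum>w\<in>tuples n k. sem n Z (upds \<nu>0 [1..<Suc k] w) \<phi>)"
      proof -
        have L: "length [1..<Suc k] = k" by simp
        show ?thesis unfolding top_def sem_sums L ..
      qed
      also have "\<dots> = (\<Sum>w\<in>tuples n k. if wl n l Z t w = c then 1 else 0)"
      proof (rule sum.cong)
        fix w assume w: "w \<in> tuples n k"
        have lw: "length w = length [1..<Suc k]" "set w \<subseteq> {1..n}" using w unfolding tuples_def by auto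
        have r: "range (upds \<nu>0 [1..<Suc k] w) \<subseteq> {1..n}" by (rule upds_range[OF r0 lw(2) lw(1)])
        have t: "tup k (upds \<nu>0 [1..<Suc k] w) = w" unfolding tup_def by (rule upds_map) (use lw in auto)
        show "sem n Z (upds \<nu>0 [1..<Suc k] w) \<phi> = (if wl n l Z t w = c then 1 else 0)"
          using \<phi>sem[OF Z r] unfolding t .
      qed simp
      also have "\<dots> = real (count (gwl n l k t Z) c)"
        unfolding gwl_def by (rule sum_ind_count[OF finite_tuples])
      finally show ?thesis .
    qed
    have "sem n G \<nu>0 top = sem n H \<nu>0 top" by (rule agree[OF inTL cl r0])
    thus "count (gwl n l k t G) c = count (gwl n l k t H) c" using val by simp
  qed
qed

theorem mainTheorem6:
  fixes n l k t :: nat and \<Omega> :: "(nat \<times> (real list \<Rightarrow> real)) set"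
  assumes "n \<ge> 1" and "l \<ge> 1" and "k \<ge> 1"
    and "\<forall>(p, f) \<in> \<Omega>. p \<ge> 1"
  shows "rho0_TL n l (TL l \<Omega> (k + 1) (t + k)) \<subseteq> rho0_gwl n l k t
       \<and> rho0_gwl n l k t \<subseteq> rho0_TL n l (TL l \<Omega> (k + 1) (t + 1))"
proof
  show "rho0_TL n l (TL l \<Omega> (k + 1) (t + k)) \<subseteq> rho0_gwl n l k t"
  proof
    fix p assume p: "p \<in> rho0_TL n l (TL l \<Omega> (k + 1) (t + k))"
    obtain G H where pGH: "p = (G, H)" by (cases p)
    have GH: "(G, H) \<in> rho0_TL n l (TL l \<Omega> (k + 1) (t + k))" using p pGH by simp
    have G: "G \<in> graphs n l" "H \<in> graphs n l" using GH unfolding rho0_TL_def by auto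
    have "gwl n l k t G = gwl n l k t H" by (rule part1[OF GH assms(3) assms(1)])
    thus "p \<in> rho0_gwl n l k t" unfolding pGH rho0_gwl_def using G by simp
  qed
next
  show "rho0_gwl n l k t \<subseteq> rho0_TL n l (TL l \<Omega> (k + 1) (t + 1))"
  proof
    fix p assume p: "p \<in> rho0_gwl n l k t"
    obtain G H where pGH: "p = (G, H)" by (cases p)
    have G: "G \<in> graphs n l" "H \<in> graphs n l" and gw: "gwl n l k t G = gwl n l k t H"
      using p pGH unfolding rho0_gwl_def by auto
    have "sem n G \<nu> \<phi> = sem n H \<nu> \<phi>"
      if "\<phi> \<in> TL l \<Omega> (k + 1) (t + 1)" "free_vars \<phi> = {}" for \<phi> \<nu>
      by (rule closed_eq[OF G assms(3) assms(1) gw]) (use that in \<open>auto simp: TL_def\<close>)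
    thus "p \<in> rho0_TL n l (TL l \<Omega> (k + 1) (t + 1))" unfolding pGH rho0_TL_def using G by blast
  qed
qed

end
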